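(* Let $G$ be a simple stochastic game and $\sigma$ a positional MAX strategy. There exists a positional best response $\tau$ to $\sigma$ such that for every positional MIN strategy $\tau'$ we have $Z(\sigma,\tau')\subseteq Z(\sigma,\tau)$.
   Context: A simple stochastic game (SSG) $G$ is a finite directed graph whose vertex set $V$ is partitioned into MAX vertices, MIN vertices, random vertices and a nonempty set $V_S$ of sinks; every non-sink vertex has at least one outgoing arc, every sink has exactly one outgoing arc, a self-loop; each random vertex $x$ carries a rational probability distribution $p_x$ on its out-neighbourhood, positive on every out-neighbour; each sink $s$ has rational value $\mathrm{Val}(s)\in[0,1]$. A positional MAX (resp. MIN) strategy assigns to each MAX (resp. MIN) vertex one of its out-neighbours. Under $\sigma,\tau$ from start $x_0$, the random play moves from MAX vertex $x$ to $\sigma(x)$, from MIN vertex $x$ to $\tau(x)$, from random vertex $x$ to an out-neighbour drawn by $p_x$ independently, and stays at a sink once reached; its value is $\mathrm{Val}(s)$ if it reaches sink $s$, else $0$, and $v_{\sigma,\tau}(x_0)$ is its expectation. A best response to $\sigma$ is a MIN strategy $\tau$ with $v_{\sigma,\tau}\le v_{\sigma,\tau'}$ pointwise for all MIN strategies $\tau'$. An absorbing set for $(\sigma,\tau)$ is a set $Z\subseteq V\setminus V_S$ such that, starting from any vertex of $Z$ and playing according to $(\sigma,\tau)$, the probability of ever reaching a vertex of $V\setminus Z$ is zero. $Z(\sigma,\tau)$ denotes the union of all absorbing sets for $(\sigma,\tau)$. *)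

theory Defs
  imports "HOL-Probability.Probability"
begin

record 'v ssg =
  verts   :: "'v set"
  maxv    :: "'v set"
  minv    :: "'v set"
  randv   :: "'v set"
  sinks   :: "'v set"
  arcs    :: "('v \<times> 'v) set"
  prob    :: "'v \<Rightarrow> 'v pmf"
  sval    :: "'v \<Rightarrow> real"

definition succs :: "'v ssg \<Rightarrow> 'v \<Rightarrow> 'v set" where
  "succs G x = {y. (x, y) \<in> arcs G}"

definition is_ssg :: "'v ssg \<Rightarrow> bool" where
  "is_ssg G \<longleftrightarrow>
     finite (verts G) \<and>
     maxv G \<union> minv G \<union> randv G \<union> sinks G = verts G \<and>
     maxv G \<inter> minv G = {} \<and> maxv G \<inter> randv G = {} \<and> maxv G \<inter> sinks G = {} \<and>
     minv G \<inter> randv G = {} \<and> minv G \<inter> sinks G = {} \<and> randv G \<inter> sinks G = {} \<and>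
     sinks G \<noteq> {} \<and>
     arcs G \<subseteq> verts G \<times> verts G \<and>
     (\<forall>x \<in> verts G - sinks G. succs G x \<noteq> {}) \<and>
     (\<forall>s \<in> sinks G. succs G s = {s}) \<and>
     (\<forall>x \<in> randv G. set_pmf (prob G x) = succs G x \<and>
                      (\<forall>y. pmf (prob G x) y \<in> \<rat>)) \<and>
     (\<forall>s \<in> sinks G. sval G s \<in> \<rat> \<and> 0 \<le> sval G s \<and> sval G s \<le> 1)"

definition max_strategy :: "'v ssg \<Rightarrow> ('v \<Rightarrow> 'v) \<Rightarrow> bool" where
  "max_strategy G \<sigma> \<longleftrightarrow> (\<forall>x \<in> maxv G. (x, \<sigma> x) \<in> arcs G)"

definition min_strategy :: "'v ssg \<Rightarrow> ('v \<Rightarrow> 'v) \<Rightarrow> bool" where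
  "min_strategy G \<tau> \<longleftrightarrow> (\<forall>x \<in> minv G. (x, \<tau> x) \<in> arcs G)"

definition step :: "'v ssg \<Rightarrow> ('v \<Rightarrow> 'v) \<Rightarrow> ('v \<Rightarrow> 'v) \<Rightarrow> 'v \<Rightarrow> 'v pmf" where
  "step G \<sigma> \<tau> x =
     (if x \<in> maxv G then return_pmf (\<sigma> x)
      else if x \<in> minv G then return_pmf (\<tau> x)
      else if x \<in> randv G then prob G x
      else return_pmf x)"

fun dist :: "'v ssg \<Rightarrow> ('v \<Rightarrow> 'v) \<Rightarrow> ('v \<Rightarrow> 'v) \<Rightarrow> nat \<Rightarrow> 'v \<Rightarrow> 'v pmf" where
  "dist G \<sigma> \<tau> 0 x = return_pmf x"
| "dist G \<sigma> \<tau> (Suc n) x = bind_pmf (dist G \<sigma> \<tau> n x) (step G \<sigma> \<tau>)"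

definition payoff :: "'v ssg \<Rightarrow> 'v \<Rightarrow> real" where
  "payoff G y = (if y \<in> sinks G then sval G y else 0)"

text \<open>Expected value of the play: since sinks are absorbing, the expected payoff
  at time n is nondecreasing in n and its supremum is the expectation of
  Val(s) on reaching sink s (0 if no sink is reached).\<close>
definition val :: "'v ssg \<Rightarrow> ('v \<Rightarrow> 'v) \<Rightarrow> ('v \<Rightarrow> 'v) \<Rightarrow> 'v \<Rightarrow> real" where
  "val G \<sigma> \<tau> x = (SUP n. measure_pmf.expectation (dist G \<sigma> \<tau> n x) (payoff G))"

definition best_response :: "'v ssg \<Rightarrow> ('v \<Rightarrow> 'v) \<Rightarrow> ('v \<Rightarrow> 'v) \<Rightarrow> bool" where
  "best_response G \<sigma> \<tau> \<longleftrightarrow> min_strategy G \<tau> \<and>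
     (\<forall>\<tau>'. min_strategy G \<tau>' \<longrightarrow> (\<forall>x \<in> verts G. val G \<sigma> \<tau> x \<le> val G \<sigma> \<tau>' x))"

text \<open>Z is absorbing: from any z in Z, the probability of ever being outside Z is 0,
  i.e. (countable union) the probability of being outside Z at each time n is 0.\<close>
definition absorbing :: "'v ssg \<Rightarrow> ('v \<Rightarrow> 'v) \<Rightarrow> ('v \<Rightarrow> 'v) \<Rightarrow> 'v set \<Rightarrow> bool" where
  "absorbing G \<sigma> \<tau> Z \<longleftrightarrow> Z \<subseteq> verts G - sinks G \<and>
     (\<forall>z \<in> Z. \<forall>n. measure_pmf.prob (dist G \<sigma> \<tau> n z) (verts G - Z) = 0)"

definition Zset :: "'v ssg \<Rightarrow> ('v \<Rightarrow> 'v) \<Rightarrow> ('v \<Rightarrow> 'v) \<Rightarrow> 'v set" where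
  "Zset G \<sigma> \<tau> = \<Union> {Z. absorbing G \<sigma> \<tau> Z}"

end

theory Submission
  imports Defs
begin

lemma E_fin: "finite (set_pmf p) \<Longrightarrow> measure_pmf.expectation p (f::_\<Rightarrow>real) = (\<Sum>a\<in>set_pmf p. f a * pmf p a)"
  by (rule integral_measure_pmf_real) auto

lemma E_bind:
  assumes "finite (set_pmf p)" "\<And>x. finite (set_pmf (q x))"
  shows "measure_pmf.expectation (bind_pmf p q) (h::_\<Rightarrow>real) = measure_pmf.expectation p (\<lambda>a. measure_pmf.expectation (q a) h)"
  using pmf_expectation_bind[of "set_pmf p" q p h] assms E_fin[of p] by (simp add: mult.commute)

lemma E_mono:
  assumes "finite (set_pmf p)" "\<And>a. a \<in> set_pmf p \<Longrightarrow> f a \<le> (g a::real)"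
  shows "measure_pmf.expectation p f \<le> measure_pmf.expectation p g"
  using assms by (simp add: E_fin sum_mono mult_right_mono)

lemma E_const: "measure_pmf.expectation p (\<lambda>_. c::real) = c"
  by simp

context
  fixes G :: "'v ssg" and \<sigma> :: "'v \<Rightarrow> 'v"
  assumes ssg: "is_ssg G" and ms: "max_strategy G \<sigma>"
begin

lemma ssg_fin: "finite (verts G)" using ssg unfolding is_ssg_def by blast
lemma ssg_arcs: "arcs G \<subseteq> verts G \<times> verts G" using ssg unfolding is_ssg_def by (elim conjE) assumption
lemma ssg_rand: "x \<in> randv G \<Longrightarrow> set_pmf (prob G x) = succs G x" using ssg unfolding is_ssg_def by blast
lemma ssg_part: "maxv G \<union> minv G \<union> randv G \<union> sinks G = verts G" using ssg unfolding is_ssg_def by (elim conjE) assumption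
lemma ssg_disj1: "maxv G \<inter> minv G = {}" using ssg unfolding is_ssg_def by (elim conjE) assumption
lemma ssg_disj2: "maxv G \<inter> randv G = {}" using ssg unfolding is_ssg_def by (elim conjE) assumption
lemma ssg_disj3: "maxv G \<inter> sinks G = {}" using ssg unfolding is_ssg_def by (elim conjE) assumption
lemma ssg_disj4: "minv G \<inter> randv G = {}" using ssg unfolding is_ssg_def by (elim conjE) assumption
lemma ssg_disj5: "minv G \<inter> sinks G = {}" using ssg unfolding is_ssg_def by (elim conjE) assumption
lemma ssg_disj6: "randv G \<inter> sinks G = {}" using ssg unfolding is_ssg_def by (elim conjE) assumption
lemma ssg_ne0: "\<forall>x\<in>verts G - sinks G. succs G x \<noteq> {}" using ssg unfolding is_ssg_def by (elim conjE) assumption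
lemma ssg_ne: "x \<in> verts G - sinks G \<Longrightarrow> succs G x \<noteq> {}" using ssg_ne0 by blast
lemma ssg_sval0: "\<forall>s\<in>sinks G. sval G s \<in> \<rat> \<and> 0 \<le> sval G s \<and> sval G s \<le> 1" using ssg unfolding is_ssg_def by (elim conjE) assumption
lemma ssg_sval: "s \<in> sinks G \<Longrightarrow> 0 \<le> sval G s \<and> sval G s \<le> 1" using ssg_sval0 by blast
lemma sinks_verts: "sinks G \<subseteq> verts G" using ssg_part by blast
lemma minv_verts: "minv G \<subseteq> verts G - sinks G" using ssg_part ssg_disj5 by blast
lemma sink_not: "x \<in> sinks G \<Longrightarrow> x \<notin> maxv G \<and> x \<notin> minv G \<and> x \<notin> randv G"
  using ssg_disj3 ssg_disj5 ssg_disj6 by blast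
lemma minv_not: "x \<in> minv G \<Longrightarrow> x \<notin> maxv G" using ssg_disj1 by blast
lemma succs_verts: "succs G x \<subseteq> verts G" using ssg_arcs unfolding succs_def by blast
lemma fin_succs: "finite (succs G x)" using succs_verts ssg_fin finite_subset by blast
lemma fin_step: "finite (set_pmf (step G \<sigma> \<tau> x))"
  unfolding step_def using ssg_rand fin_succs by auto

lemma fin_dist: "finite (set_pmf (dist G \<sigma> \<tau> n x))"
  by (induction n) (auto simp: fin_step)

lemma dist_Suc': "dist G \<sigma> \<tau> (Suc n) x = bind_pmf (step G \<sigma> \<tau> x) (dist G \<sigma> \<tau> n)"
proof (induction n arbitrary: x)
  case 0
  then show ?case by (simp add: bind_return_pmf bind_return_pmf')
next
  case (Suc n)
  have "dist G \<sigma> \<tau> (Suc (Suc n)) x = bind_pmf (bind_pmf (step G \<sigma> \<tau> x) (dist G \<sigma> \<tau> n)) (step G \<sigma> \<tau>)"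
    by (subst dist.simps(2), subst Suc, rule refl)
  also have "\<dots> = bind_pmf (step G \<sigma> \<tau> x) (\<lambda>y. bind_pmf (dist G \<sigma> \<tau> n y) (step G \<sigma> \<tau>))"
    by (rule bind_assoc_pmf)
  also have "\<dots> = bind_pmf (step G \<sigma> \<tau> x) (dist G \<sigma> \<tau> (Suc n))" by (rule bind_pmf_cong) simp_all
  finally show ?case .
qed

definition u where "u \<tau> n x = measure_pmf.expectation (dist G \<sigma> \<tau> n x) (payoff G)"

lemma payoff_bnd: "0 \<le> payoff G y" "payoff G y \<le> 1"
  unfolding payoff_def using ssg_sval by auto

lemma u_0: "u \<tau> 0 x = payoff G x" unfolding u_def by simp

lemma u_Suc: "u \<tau> (Suc n) x = measure_pmf.expectation (step G \<sigma> \<tau> x) (u \<tau> n)"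
  unfolding u_def dist_Suc' by (rule E_bind) (auto simp: fin_step fin_dist)

lemma u_bnd: "0 \<le> u \<tau> n x \<and> u \<tau> n x \<le> 1"
proof (induction n arbitrary: x)
  case 0
  then show ?case using payoff_bnd u_0 by simp
next
  case (Suc n)
  have "measure_pmf.expectation (step G \<sigma> \<tau> x) (\<lambda>_. 0) \<le> measure_pmf.expectation (step G \<sigma> \<tau> x) (u \<tau> n)"
    by (rule E_mono) (auto simp: fin_step Suc)
  moreover have "measure_pmf.expectation (step G \<sigma> \<tau> x) (u \<tau> n) \<le> measure_pmf.expectation (step G \<sigma> \<tau> x) (\<lambda>_. 1)"
    by (rule E_mono) (auto simp: fin_step Suc)
  ultimately show ?case by (simp add: u_Suc)
qed

lemma u_mono: "u \<tau> n x \<le> u \<tau> (Suc n) x"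
proof (induction n arbitrary: x)
  case 0
  show ?case
  proof (cases "x \<in> sinks G")
    case True
    then have "x \<notin> maxv G" "x \<notin> minv G" "x \<notin> randv G" using sink_not by auto
    then have "step G \<sigma> \<tau> x = return_pmf x" unfolding step_def by simp
    then show ?thesis by (simp add: u_Suc u_0)
  next
    case False
    then show ?thesis using u_bnd[of \<tau> 1 x] by (simp add: u_0 payoff_def)
  qed
next
  case (Suc n)
  show ?case
    by (simp only: u_Suc[of \<tau> "Suc n" x] u_Suc[of \<tau> n x]) (rule E_mono, auto simp: fin_step intro: Suc)
qed

lemma val_u: "val G \<sigma> \<tau> x = (SUP n. u \<tau> n x)" unfolding val_def u_def by simp

lemma bdd: "bdd_above (range (\<lambda>n. u \<tau> n x))"
  using u_bnd by (auto intro!: bdd_aboveI)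

lemma val_ge: "u \<tau> n x \<le> val G \<sigma> \<tau> x"
  unfolding val_u by (rule cSUP_upper[OF _ bdd]) auto

lemma val_nonneg: "0 \<le> val G \<sigma> \<tau> x"
  using val_ge[of \<tau> 0 x] u_bnd[of \<tau> 0 x] by linarith

lemma val_lim: "(\<lambda>n. u \<tau> n x) \<longlonglongrightarrow> val G \<sigma> \<tau> x"
  unfolding val_u by (rule LIMSEQ_incseq_SUP[OF bdd]) (rule incseq_SucI, rule u_mono)

lemma val_super: "measure_pmf.expectation (step G \<sigma> \<tau> x) (val G \<sigma> \<tau>) \<le> val G \<sigma> \<tau> x"
proof -
  have "(\<lambda>n. \<Sum>a\<in>set_pmf (step G \<sigma> \<tau> x). u \<tau> n a * pmf (step G \<sigma> \<tau> x) a)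
     \<longlonglongrightarrow> (\<Sum>a\<in>set_pmf (step G \<sigma> \<tau> x). val G \<sigma> \<tau> a * pmf (step G \<sigma> \<tau> x) a)"
    by (intro tendsto_intros val_lim)
  then have "(\<lambda>n. u \<tau> (Suc n) x) \<longlonglongrightarrow> measure_pmf.expectation (step G \<sigma> \<tau> x) (val G \<sigma> \<tau>)"
    by (simp add: u_Suc E_fin fin_step)
  then show ?thesis
    by (rule LIMSEQ_le_const2) (auto intro: val_ge)
qed

lemma step_verts:
  assumes "min_strategy G \<tau>" "x \<in> verts G"
  shows "set_pmf (step G \<sigma> \<tau> x) \<subseteq> verts G"
  using assms ms succs_verts ssg_rand unfolding step_def min_strategy_def max_strategy_def
  by (auto simp: succs_def)

lemma lfp:
  assumes "min_strategy G \<tau>"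
    and "\<And>x. x \<in> verts G \<Longrightarrow> payoff G x \<le> v x"
    and "\<And>x. x \<in> verts G \<Longrightarrow> measure_pmf.expectation (step G \<sigma> \<tau> x) v \<le> v x"
    and "x \<in> verts G"
  shows "val G \<sigma> \<tau> x \<le> v x"
proof -
  have "\<forall>x\<in>verts G. u \<tau> n x \<le> v x" for n
  proof (induction n)
    case 0
    then show ?case using assms(2) by (simp add: u_0)
  next
    case (Suc n)
    show ?case
    proof
      fix x assume x: "x \<in> verts G"
      have "u \<tau> (Suc n) x \<le> measure_pmf.expectation (step G \<sigma> \<tau> x) v"
        unfolding u_Suc by (rule E_mono) (use Suc step_verts[OF assms(1) x] in \<open>auto simp: fin_step\<close>)
      also have "\<dots> \<le> v x" using assms(3) x by blast
      finally show "u \<tau> (Suc n) x \<le> v x" .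
    qed
  qed
  then show ?thesis unfolding val_u using assms(4) by (auto intro: cSUP_least)
qed

lemma closed_Zset:
  assumes "min_strategy G \<tau>" "z \<in> Zset G \<sigma> \<tau>"
  shows "z \<in> verts G - sinks G \<and> set_pmf (step G \<sigma> \<tau> z) \<subseteq> Zset G \<sigma> \<tau>"
proof -
  obtain Z where Z: "absorbing G \<sigma> \<tau> Z" "z \<in> Z" using assms(2) unfolding Zset_def by auto
  have zv: "z \<in> verts G - sinks G" using Z unfolding absorbing_def by auto
  have "measure_pmf.prob (dist G \<sigma> \<tau> 1 z) (verts G - Z) = 0" using Z unfolding absorbing_def by blast
  then have "set_pmf (step G \<sigma> \<tau> z) \<inter> (verts G - Z) = {}"
    by (simp add: measure_pmf_zero_iff bind_return_pmf)
  then have "set_pmf (step G \<sigma> \<tau> z) \<subseteq> Z" using step_verts[OF assms(1)] zv by blast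
  then show ?thesis using zv Z unfolding Zset_def by blast
qed

lemma closed_absorbing:
  assumes "W \<subseteq> verts G - sinks G" "\<And>z. z \<in> W \<Longrightarrow> set_pmf (step G \<sigma> \<tau> z) \<subseteq> W"
  shows "W \<subseteq> Zset G \<sigma> \<tau>"
proof -
  have "set_pmf (dist G \<sigma> \<tau> n z) \<subseteq> W" if "z \<in> W" for n z
    using that by (induction n) (use assms(2) in auto)
  then have "absorbing G \<sigma> \<tau> W" unfolding absorbing_def using assms(1)
    by (auto simp: measure_pmf_zero_iff)
  then show ?thesis unfolding Zset_def by blast
qed

lemma Zset_sub: "min_strategy G \<tau> \<Longrightarrow> z \<in> Zset G \<sigma> \<tau> \<Longrightarrow> z \<in> verts G - sinks G"
  using closed_Zset by blast

lemma Zset_step: "min_strategy G \<tau> \<Longrightarrow> z \<in> Zset G \<sigma> \<tau> \<Longrightarrow> set_pmf (step G \<sigma> \<tau> z) \<subseteq> Zset G \<sigma> \<tau>"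
  using closed_Zset by blast

lemma val_Zset:
  assumes "min_strategy G \<tau>" "z \<in> Zset G \<sigma> \<tau>"
  shows "val G \<sigma> \<tau> z = 0"
proof -
  have sub: "set_pmf (dist G \<sigma> \<tau> n z) \<subseteq> Zset G \<sigma> \<tau>" for n
  proof (induction n)
    case 0
    then show ?case using assms(2) by simp
  next
    case (Suc n)
    have "\<forall>y\<in>set_pmf (dist G \<sigma> \<tau> n z). set_pmf (step G \<sigma> \<tau> y) \<subseteq> Zset G \<sigma> \<tau>"
      using Suc.IH Zset_step[OF assms(1)] by blast
    then show ?case by (simp only: dist.simps set_bind_pmf) (rule UN_least, simp)
  qed
  have "u \<tau> n z = 0" for n
  proof -
    have "payoff G a = 0" if "a \<in> set_pmf (dist G \<sigma> \<tau> n z)" for a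
    proof -
      have "a \<notin> sinks G" using Zset_sub[OF assms(1)] sub that by blast
      then show ?thesis unfolding payoff_def by simp
    qed
    then show ?thesis unfolding u_def by (simp add: E_fin fin_dist)
  qed
  then show ?thesis unfolding val_u by simp
qed

lemma main:
  shows "\<exists>\<tau>. best_response G \<sigma> \<tau> \<and>
           (\<forall>\<tau>'. min_strategy G \<tau>' \<longrightarrow> Zset G \<sigma> \<tau>' \<subseteq> Zset G \<sigma> \<tau>)"
proof -
  define S where "S = {\<tau>. min_strategy G \<tau>}"
  define vs where "vs x = (INF \<tau>\<in>S. val G \<sigma> \<tau> x)" for x
  have succ_ne: "\<exists>y. (x, y) \<in> arcs G" if "x \<in> minv G" for x
    using ssg_ne minv_verts that unfolding succs_def by blast
  define t0 where "t0 x = (SOME y. (x, y) \<in> arcs G)" for x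
  have "t0 \<in> S" unfolding S_def min_strategy_def t0_def using succ_ne by (auto intro: someI_ex)
  then have Sne: "S \<noteq> {}" by blast
  have bddb: "bdd_below ((\<lambda>\<tau>. val G \<sigma> \<tau> x) ` S)" for x
    using val_nonneg by (auto intro!: bdd_belowI)
  have vs_le: "vs x \<le> val G \<sigma> \<tau> x" if "\<tau> \<in> S" for x \<tau>
    unfolding vs_def using that by (rule cINF_lower[OF bddb])
  have vs_nonneg: "0 \<le> vs x" for x
    unfolding vs_def using Sne val_nonneg by (auto intro: cINF_greatest)
  have greedy: "\<exists>y. (x, y) \<in> arcs G \<and> (\<forall>z. (x, z) \<in> arcs G \<longrightarrow> vs y \<le> vs z)" if "x \<in> minv G" for x
  proof -
    have fin: "finite (succs G x)" by (rule fin_succs)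
    have ne: "succs G x \<noteq> {}" using succ_ne[OF that] unfolding succs_def by auto
    have "Min (vs ` succs G x) \<in> vs ` succs G x" using fin ne by (intro Min_in) auto
    then obtain y where y: "y \<in> succs G x" "vs y = Min (vs ` succs G x)" by (metis imageE)
    have "\<forall>z. (x, z) \<in> arcs G \<longrightarrow> vs y \<le> vs z"
      using y fin by (auto simp: succs_def)
    then show ?thesis using y(1) unfolding succs_def by auto
  qed
  define gr where "gr x = (SOME y. (x, y) \<in> arcs G \<and> (\<forall>z. (x, z) \<in> arcs G \<longrightarrow> vs y \<le> vs z))" for x
  have gr: "(x, gr x) \<in> arcs G \<and> (\<forall>z. (x, z) \<in> arcs G \<longrightarrow> vs (gr x) \<le> vs z)" if "x \<in> minv G" for x
    unfolding gr_def by (rule someI_ex[OF greedy[OF that]])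
  define W where "W = (\<Union>\<tau>'\<in>S. Zset G \<sigma> \<tau>')"
  define pick where "pick x = (SOME \<tau>'. \<tau>' \<in> S \<and> x \<in> Zset G \<sigma> \<tau>')" for x
  have pick: "pick x \<in> S \<and> x \<in> Zset G \<sigma> (pick x)" if "x \<in> W" for x
  proof -
    have "\<exists>\<tau>'. \<tau>' \<in> S \<and> x \<in> Zset G \<sigma> \<tau>'" using that unfolding W_def by blast
    then show ?thesis unfolding pick_def by (rule someI_ex)
  qed
  define \<tau> where "\<tau> x = (if x \<in> W then pick x x else gr x)" for x
  have step_eq: "step G \<sigma> \<tau>1 x = step G \<sigma> \<tau>2 x" if "x \<notin> minv G" for x \<tau>1 \<tau>2
    using that unfolding step_def by simp
  have step_min: "step G \<sigma> \<tau>1 x = return_pmf (\<tau>1 x)" if "x \<in> minv G" for x \<tau>1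
    using that minv_not unfolding step_def by auto
  have tS: "\<tau> \<in> S"
    unfolding S_def min_strategy_def mem_Collect_eq
  proof
    fix x assume x: "x \<in> minv G"
    show "(x, \<tau> x) \<in> arcs G"
    proof (cases "x \<in> W")
      case True
      then show ?thesis using pick[OF True] x unfolding \<tau>_def S_def min_strategy_def by auto
    next
      case False
      then show ?thesis using gr[OF x] unfolding \<tau>_def by auto
    qed
  qed
  have vs_Z: "vs y = 0" if "\<tau>' \<in> S" "y \<in> Zset G \<sigma> \<tau>'" for y \<tau>'
    using vs_le[OF that(1), of y] val_Zset[of \<tau>' y] that vs_nonneg[of y] unfolding S_def by auto
  have super: "measure_pmf.expectation (step G \<sigma> \<tau> x) vs \<le> vs x" if x: "x \<in> verts G" for x
  proof (cases "x \<in> minv G")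
    case True
    have "vs (\<tau> x) \<le> vs x"
    proof (cases "x \<in> W")
      case True
      note p = pick[OF True]
      have "pick x x \<in> set_pmf (step G \<sigma> (pick x) x)" using step_min[OF \<open>x \<in> minv G\<close>] by simp
      then have "pick x x \<in> Zset G \<sigma> (pick x)" using closed_Zset[of "pick x" x] p unfolding S_def by auto
      then have "vs (\<tau> x) = 0" using vs_Z p True unfolding \<tau>_def by auto
      then show ?thesis using vs_nonneg by simp
    next
      case False
      have "vs (gr x) \<le> vs x" unfolding vs_def[of x]
      proof (rule cINF_greatest[OF Sne])
        fix \<tau>' assume t': "\<tau>' \<in> S"
        have "vs (gr x) \<le> vs (\<tau>' x)" using gr[OF \<open>x \<in> minv G\<close>] t' \<open>x \<in> minv G\<close>
          unfolding S_def min_strategy_def by auto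
        also have "\<dots> \<le> val G \<sigma> \<tau>' (\<tau>' x)" by (rule vs_le[OF t'])
        also have "\<dots> \<le> val G \<sigma> \<tau>' x" using val_super[of \<tau>' x] step_min[OF \<open>x \<in> minv G\<close>] by simp
        finally show "vs (gr x) \<le> val G \<sigma> \<tau>' x" .
      qed
      then show ?thesis using False unfolding \<tau>_def by simp
    qed
    then show ?thesis using step_min[OF True] by simp
  next
    case False
    show ?thesis unfolding vs_def[of x]
    proof (rule cINF_greatest[OF Sne])
      fix \<tau>' assume t': "\<tau>' \<in> S"
      have "measure_pmf.expectation (step G \<sigma> \<tau> x) vs = measure_pmf.expectation (step G \<sigma> \<tau>' x) vs"
        using step_eq[OF False] by metis
      also have "\<dots> \<le> measure_pmf.expectation (step G \<sigma> \<tau>' x) (val G \<sigma> \<tau>')"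
        by (rule E_mono) (auto simp: fin_step intro: vs_le[OF t'])
      also have "\<dots> \<le> val G \<sigma> \<tau>' x" by (rule val_super)
      finally show "measure_pmf.expectation (step G \<sigma> \<tau> x) vs \<le> val G \<sigma> \<tau>' x" .
    qed
  qed
  have pay: "payoff G x \<le> vs x" for x
    unfolding vs_def using Sne val_ge[of _ 0 x] by (auto intro!: cINF_greatest simp: u_0)
  have br: "best_response G \<sigma> \<tau>"
    unfolding best_response_def
  proof (intro conjI allI impI ballI)
    show "min_strategy G \<tau>" using tS unfolding S_def by simp
    fix \<tau>' x assume "min_strategy G \<tau>'" "x \<in> verts G"
    then have "val G \<sigma> \<tau> x \<le> vs x" using lfp[of \<tau> vs x] tS pay super unfolding S_def by auto
    also have "\<dots> \<le> val G \<sigma> \<tau>' x" using vs_le \<open>min_strategy G \<tau>'\<close> unfolding S_def by auto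
    finally show "val G \<sigma> \<tau> x \<le> val G \<sigma> \<tau>' x" .
  qed
  have "W \<subseteq> Zset G \<sigma> \<tau>"
  proof (rule closed_absorbing)
    show "W \<subseteq> verts G - sinks G" unfolding W_def S_def using closed_Zset by blast
    fix z assume z: "z \<in> W"
    note p = pick[OF z]
    have cz: "set_pmf (step G \<sigma> (pick z) z) \<subseteq> Zset G \<sigma> (pick z)"
      using closed_Zset[of "pick z" z] p unfolding S_def by auto
    have "Zset G \<sigma> (pick z) \<subseteq> W" unfolding W_def using p by blast
    show "set_pmf (step G \<sigma> \<tau> z) \<subseteq> W"
    proof (cases "z \<in> minv G")
      case True
      then show ?thesis using cz \<open>Zset G \<sigma> (pick z) \<subseteq> W\<close> step_min[OF True, of \<tau>] step_min[OF True, of "pick z"] z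
        unfolding \<tau>_def by auto
    next
      case False
      then show ?thesis using cz \<open>Zset G \<sigma> (pick z) \<subseteq> W\<close> step_eq[OF False, of \<tau> "pick z"] by auto
    qed
  qed
  then have "\<forall>\<tau>'. min_strategy G \<tau>' \<longrightarrow> Zset G \<sigma> \<tau>' \<subseteq> Zset G \<sigma> \<tau>"
    unfolding W_def S_def by blast
  then show ?thesis using br by blast
qed

end

theorem lemma20:
  assumes "is_ssg G" and "max_strategy G \<sigma>"
  shows "\<exists>\<tau>. best_response G \<sigma> \<tau> \<and>
           (\<forall>\<tau>'. min_strategy G \<tau>' \<longrightarrow> Zset G \<sigma> \<tau>' \<subseteq> Zset G \<sigma> \<tau>)"
  using main[OF assms] .

end
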